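(* Let $n\ge2$, let $K\subset\mathbb{R}^n$ be compact and $f:K\to\mathbb{R}^m$ continuous. For any $\epsilon>0$ there exists $F:\mathbb{R}^n\to\mathbb{R}^m$ such that (1) $F$ is the feedforward function of a radial neural network with $2M(f,K,\epsilon/2)$ hidden layers whose widths are all $\max(n,m)$, and (2) $|F(x)-f(x)|<\epsilon$ for all $x\in K$.
   Context: $B_r(c)$ is the open ball. $M(f,K,\delta)$ is the minimal $M$ for which there exist $c_1,\dots,c_M\in K$, $r_1,\dots,r_M\in(0,1)$ with $K\subseteq\bigcup_iB_{r_i}(c_i)$, $f(B_{r_i}(c_i)\cap K)\subseteq B_\delta(f(c_i))$ for all $i$, and $|c_i-c_j|\ge r_i$ for all $i\ne j$. For $h:\mathbb{R}\to\mathbb{R}$ piecewise differentiable, the radial rescaling function $h^{(k)}(v)=h(|v|)v/|v|$ ($v\ne0$), $h^{(k)}(0)=0$. A radial neural network with widths $(n_0,\dots,n_L)$ has weights $W_i\in\mathbb{R}^{n_i\times n_{i-1}}$, biases $b_i$, radial rescaling functions $\rho_i$ on $\mathbb{R}^{n_i}$; hidden layers are $1,\dots,L-1$; feedforward function $F=F_L$, $F_0=\mathrm{id}$, $F_i(x)=\rho_i(W_iF_{i-1}(x)+b_i)$. *)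

theory Defs
  imports "HOL-Analysis.Analysis"
begin

text \<open>Piecewise differentiable real function: differentiable outside a finite set
  (no continuity required; discontinuous step-like rescalings are allowed).\<close>
definition piecewise_diff :: "(real \<Rightarrow> real) \<Rightarrow> bool" where
  "piecewise_diff h \<longleftrightarrow> (\<exists>S. finite S \<and> (\<forall>x. x \<notin> S \<longrightarrow> h differentiable (at x)))"

definition radial_rescale :: "(real \<Rightarrow> real) \<Rightarrow> 'a::real_normed_vector \<Rightarrow> 'a" where
  "radial_rescale h v = (if v = 0 then 0 else (h (norm v) / norm v) *\<^sub>R v)"

definition radial_fn :: "('a::real_normed_vector \<Rightarrow> 'a) \<Rightarrow> bool" where
  "radial_fn \<rho> \<longleftrightarrow> (\<exists>h. piecewise_diff h \<and> \<rho> = radial_rescale h)"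

definition layer :: "real^'a^'b \<Rightarrow> real^'b \<Rightarrow> (real^'b \<Rightarrow> real^'b) \<Rightarrow> real^'a \<Rightarrow> real^'b" where
  "layer W b \<rho> x = \<rho> (W *v x + b)"

text \<open>Composition of a list of square layers, first list element applied first.\<close>
definition comp_layers ::
  "((real^'k^'k) \<times> (real^'k) \<times> (real^'k \<Rightarrow> real^'k)) list \<Rightarrow> real^'k \<Rightarrow> real^'k" where
  "comp_layers ls = fold (\<lambda>(W, b, \<rho>) g. layer W b \<rho> \<circ> g) ls id"

text \<open>F : R^n \<rightarrow> R^m is the feedforward function of a radial neural network with
  H hidden layers, all of width CARD('k) (widths (n, k, ..., k, m), L = H + 1 layers).\<close>
definition radial_nn_hidden ::
  "'k::finite itself \<Rightarrow> nat \<Rightarrow> (real^'n \<Rightarrow> real^'m) \<Rightarrow> bool" where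
  "radial_nn_hidden _ H F \<longleftrightarrow>
     (if H = 0 then
        (\<exists>(W :: real^'n^'m) b \<rho>. radial_fn \<rho> \<and> F = layer W b \<rho>)
      else
        (\<exists>(W1 :: real^'n^'k) b1 \<rho>1
           (ls :: ((real^'k^'k) \<times> (real^'k) \<times> (real^'k \<Rightarrow> real^'k)) list)
           (WL :: real^'k^'m) bL \<rho>L.
           length ls = H - 1 \<and> radial_fn \<rho>1 \<and> radial_fn \<rho>L \<and>
           (\<forall>(W, b, \<rho>) \<in> set ls. radial_fn \<rho>) \<and>
           F = layer WL bL \<rho>L \<circ> comp_layers ls \<circ> layer W1 b1 \<rho>1))"

definition cover_ok :: "('a::metric_space \<Rightarrow> 'b::metric_space) \<Rightarrow> 'a set \<Rightarrow> real \<Rightarrow> nat \<Rightarrow> bool" where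
  "cover_ok f K \<delta> M \<longleftrightarrow>
     (\<exists>c r. (\<forall>i<M. c i \<in> K \<and> 0 < r i \<and> r i < 1) \<and>
            K \<subseteq> (\<Union>i<M. ball (c i) (r i)) \<and>
            (\<forall>i<M. f ` (ball (c i) (r i) \<inter> K) \<subseteq> ball (f (c i)) \<delta>) \<and>
            (\<forall>i<M. \<forall>j<M. i \<noteq> j \<longrightarrow> dist (c i) (c j) \<ge> r i))"

definition Mcov :: "('a::metric_space \<Rightarrow> 'b::metric_space) \<Rightarrow> 'a set \<Rightarrow> real \<Rightarrow> nat" where
  "Mcov f K \<delta> = (LEAST M. cover_ok f K \<delta> M)"

end

theory Submission
  imports Defs
begin

lemma pd_id: "piecewise_diff (\<lambda>s. s)"
  unfolding piecewise_diff_def by (rule exI[of _ "{}"]) auto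

lemma pd_local:
  assumes "finite S"
    and "\<And>x. x \<notin> S \<Longrightarrow> \<exists>U g. open U \<and> x \<in> U \<and> g differentiable (at x) \<and> (\<forall>y\<in>U. h y = g y)"
  shows "piecewise_diff h"
  unfolding piecewise_diff_def
proof (intro exI[of _ S] conjI allI impI)
  fix x assume "x \<notin> S"
  then obtain U g where U: "open U" "x \<in> U" "g differentiable (at x)" "\<forall>y\<in>U. h y = g y"
    using assms(2) by blast
  then obtain D where "(g has_derivative D) (at x)" unfolding differentiable_def by blast
  then have "(h has_derivative D) (at x)"
    by (rule has_derivative_transform_within_open[OF _ U(1) U(2)]) (use U(4) in auto)
  then show "h differentiable (at x)" unfolding differentiable_def by blast
qed (use assms in auto)

lemma pd_collapse: "piecewise_diff (\<lambda>s. if s < r then 0 else s)"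
proof (rule pd_local[of "{r}"])
  fix x assume "x \<notin> {r}"
  then have "x < r \<or> x > r" by auto
  then show "\<exists>U g. open U \<and> x \<in> U \<and> g differentiable (at x) \<and>
      (\<forall>y\<in>U. (if y < r then 0 else y) = g y)"
  proof
    assume "x < r"
    then show ?thesis
      by (intro exI[of _ "{..<r}"] exI[of _ "\<lambda>_. 0::real"]) auto
  next
    assume "x > r"
    then show ?thesis
      by (intro exI[of _ "{r<..}"] exI[of _ "\<lambda>y. y::real"]) auto
  qed
qed auto

lemma pd_point: "piecewise_diff (\<lambda>s. if s = a then b else s)"
proof (rule pd_local[of "{a}"])
  fix x assume "x \<notin> {a}"
  then show "\<exists>U g. open U \<and> x \<in> U \<and> g differentiable (at x) \<and>
      (\<forall>y\<in>U. (if y = a then b else y) = g y)"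
    by (intro exI[of _ "-{a}"] exI[of _ "\<lambda>y. y::real"]) auto
qed auto

lemma rr_id: "radial_rescale (\<lambda>s. s) v = v"
  unfolding radial_rescale_def by auto

lemma radial_id: "radial_fn (\<lambda>v::'a::real_normed_vector. v)"
proof -
  have "(\<lambda>v::'a. v) = radial_rescale (\<lambda>s. s)" by (rule ext) (simp add: rr_id)
  then show ?thesis unfolding radial_fn_def using pd_id by blast
qed

lemma radial_rr: "piecewise_diff h \<Longrightarrow> radial_fn (radial_rescale h)"
  unfolding radial_fn_def by blast

lemma collapse:
  fixes p c :: "'a::real_normed_vector"
  assumes "0 < r"
  shows "c + radial_rescale (\<lambda>s. if s < r then 0 else s) (p - c) = (if dist p c < r then c else p)"
  using assms unfolding radial_rescale_def by (auto simp: dist_norm)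

lemma move:
  fixes p t :: "'a::real_normed_vector"
  assumes "p \<noteq> t" "finite Q" "p \<notin> Q"
  shows "\<exists>z h. piecewise_diff h \<and> z + radial_rescale h (p - z) = t \<and>
     (\<forall>q\<in>Q. z + radial_rescale h (q - z) = q)"
proof -
  define \<delta> where "\<delta> = (if Q = {} then 1 else Min ((\<lambda>q. dist p q) ` Q))"
  have dpos: "\<delta> > 0" using assms unfolding \<delta>_def by auto
  have dle: "\<forall>q\<in>Q. \<delta> \<le> dist p q" using assms unfolding \<delta>_def by auto
  define d where "d = p - t"
  have nd: "norm d > 0" using assms unfolding d_def by auto
  define a where "a = \<delta> / (4 * norm d)"
  have apos: "a > 0" using dpos nd unfolding a_def by auto
  define z where "z = p + a *\<^sub>R d"
  have pz: "p - z = - a *\<^sub>R d" unfolding z_def by auto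
  have npz: "norm (p - z) = \<delta> / 4" unfolding pz a_def using nd dpos by auto
  have tz: "t - z = - (1 + a) *\<^sub>R d" unfolding z_def d_def by (simp add: algebra_simps)
  have ntz: "norm (t - z) = (1 + a) * norm d" unfolding tz using apos by auto
  define h where "h = (\<lambda>s. if s = \<delta> / 4 then norm (t - z) else s)"
  have "piecewise_diff h" unfolding h_def by (rule pd_point)
  moreover have "z + radial_rescale h (p - z) = t"
  proof -
    have "p - z \<noteq> 0" using npz dpos by auto
    then have "radial_rescale h (p - z) = ((1 + a) * norm d / (a * norm d)) *\<^sub>R (- a *\<^sub>R d)"
      unfolding radial_rescale_def h_def npz ntz using pz apos nd by (simp add: npz[symmetric])
    also have "\<dots> = - (((1 + a) * norm d / (a * norm d)) * a) *\<^sub>R d" by simp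
    also have "((1 + a) * norm d / (a * norm d)) * a = 1 + a" using apos nd by (simp add: field_simps)
    finally have "radial_rescale h (p - z) = - (1 + a) *\<^sub>R d" by simp
    then have "radial_rescale h (p - z) = t - z" using tz by simp
    then show ?thesis by simp
  qed
  moreover have "\<forall>q\<in>Q. z + radial_rescale h (q - z) = q"
  proof
    fix q assume "q \<in> Q"
    then have "dist p q \<ge> \<delta>" using dle by auto
    moreover have "norm (q - z) \<ge> dist p q - norm (p - z)"
      using norm_triangle_ineq4[of "q - z" "p - z"] by (simp add: dist_norm norm_minus_commute)
    ultimately have "norm (q - z) > \<delta> / 4" using npz dpos by auto
    then show "z + radial_rescale h (q - z) = q"
      unfolding radial_rescale_def h_def using dpos by auto
  qed
  ultimately show ?thesis by blast
qed

definition hid :: "nat \<Rightarrow> (real^'n \<Rightarrow> real^'k) \<Rightarrow> bool" where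
  "hid H G \<longleftrightarrow> (\<exists>(W1 :: real^'n^'k) b1 \<rho>1
           (ls :: ((real^'k^'k) \<times> (real^'k) \<times> (real^'k \<Rightarrow> real^'k)) list).
           length ls = H - 1 \<and> radial_fn \<rho>1 \<and>
           (\<forall>(W, b, \<rho>) \<in> set ls. radial_fn \<rho>) \<and>
           G = comp_layers ls \<circ> layer W1 b1 \<rho>1)"

lemma comp_layers_snoc: "comp_layers (ls @ [(W :: real^'k^'k, b, \<rho>)]) = layer W b \<rho> \<circ> comp_layers ls"
  unfolding comp_layers_def by simp

lemma hid1: "radial_fn \<rho> \<Longrightarrow> hid 1 (layer W b \<rho>)"
  unfolding hid_def by (intro exI[of _ W] exI[of _ b] exI[of _ \<rho>] exI[of _ "[]"])
    (simp add: comp_layers_def)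

lemma hid_step:
  fixes G :: "real^'n \<Rightarrow> real^'k" and W :: "real^'k^'k"
  assumes "hid H G" "H \<ge> 1" "radial_fn \<rho>"
  shows "hid (Suc H) (layer W b \<rho> \<circ> G)"
proof -
  obtain W1 b1 \<rho>1 ls where h: "length ls = H - 1" "radial_fn \<rho>1"
    "\<forall>(W, b, \<rho>) \<in> set ls. radial_fn \<rho>" "G = comp_layers ls \<circ> layer W1 b1 \<rho>1"
    using assms(1) unfolding hid_def by blast
  show ?thesis unfolding hid_def
    apply (intro exI[of _ W1] exI[of _ b1] exI[of _ \<rho>1] exI[of _ "ls @ [(W, b, \<rho>)]"])
    using h assms by (auto simp: comp_layers_snoc comp_assoc)
qed

lemma hid_out:
  fixes G :: "real^'n \<Rightarrow> real^'k::finite"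
  assumes "hid H G" "H \<ge> 1" "radial_fn \<rho>"
  shows "radial_nn_hidden TYPE('k) H (layer WL bL \<rho> \<circ> G)"
proof -
  obtain W1 b1 \<rho>1 ls where h: "length ls = H - 1" "radial_fn \<rho>1"
    "\<forall>(W, b, \<rho>) \<in> set ls. radial_fn \<rho>" "G = comp_layers ls \<circ> layer W1 b1 \<rho>1"
    using assms(1) unfolding hid_def by blast
  have "H \<noteq> 0" using assms by auto
  then show ?thesis unfolding radial_nn_hidden_def
    apply simp
    apply (intro exI[of _ W1] exI[of _ b1] exI[of _ \<rho>1] exI[of _ ls] exI[of _ WL] exI[of _ bL] exI[of _ \<rho>])
    using h assms by (auto simp: comp_assoc)
qed

definition habs :: "nat \<Rightarrow> (real^'n \<Rightarrow> real^'k) \<Rightarrow> bool" where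
  "habs H P \<longleftrightarrow> (\<exists>z. hid H (\<lambda>x. P x - z))"

lemma habs1:
  assumes "piecewise_diff h"
  shows "habs 1 (\<lambda>x. z + radial_rescale h (W *v x - z))"
proof -
  have "hid 1 (layer W (-z) (radial_rescale h))" by (rule hid1) (rule radial_rr[OF assms])
  moreover have "layer W (-z) (radial_rescale h) = (\<lambda>x. (z + radial_rescale h (W *v x - z)) - z)"
    unfolding layer_def by auto
  ultimately show ?thesis unfolding habs_def by metis
qed

lemma habs_step:
  assumes "habs H P" "H \<ge> 1" "piecewise_diff h"
  shows "habs (Suc H) (\<lambda>x. z' + radial_rescale h (P x - z'))"
proof -
  obtain z where "hid H (\<lambda>x. P x - z)" using assms(1) unfolding habs_def by blast
  then have "hid (Suc H) (layer (mat 1) (z - z') (radial_rescale h) \<circ> (\<lambda>x. P x - z))"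
    by (rule hid_step) (use assms radial_rr in auto)
  moreover have "layer (mat 1) (z - z') (radial_rescale h) \<circ> (\<lambda>x. P x - z)
     = (\<lambda>x. (z' + radial_rescale h (P x - z')) - z')"
    unfolding layer_def by (auto simp: matrix_vector_mul_lid)
  ultimately show ?thesis unfolding habs_def by metis
qed

lemma habs_out:
  fixes P :: "real^'n \<Rightarrow> real^'k::finite" and Q :: "real^'k^'m"
  assumes "habs H P" "H \<ge> 1"
  shows "radial_nn_hidden TYPE('k) H (\<lambda>x. Q *v P x + c)"
proof -
  obtain z where "hid H (\<lambda>x. P x - z)" using assms(1) unfolding habs_def by blast
  then have "radial_nn_hidden TYPE('k) H (layer Q (c + Q *v z) (\<lambda>v. v) \<circ> (\<lambda>x. P x - z))"
    by (rule hid_out) (use assms radial_id in auto)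
  moreover have "layer Q (c + Q *v z) (\<lambda>v. v) \<circ> (\<lambda>x. P x - z) = (\<lambda>x. Q *v P x + c)"
    unfolding layer_def by (auto simp: matrix_vector_mult_diff_distrib)
  ultimately show ?thesis by simp
qed

definition Emb :: "('n \<Rightarrow> 'k) \<Rightarrow> real^'n^'k" where
  "Emb g = (\<chi> i j. if i = g j then 1 else 0)"

lemma emb_apply:
  fixes g :: "'n::finite \<Rightarrow> 'k::finite"
  assumes "inj g"
  shows "(Emb g *v x) $ i = (if i \<in> range g then x $ (inv g i) else 0)"
proof -
  have "(Emb g *v x) $ i = (\<Sum>j\<in>UNIV. (if i = g j then x $ j else 0))"
    unfolding Emb_def matrix_vector_mult_def by (auto intro!: sum.cong)
  also have "\<dots> = (if i \<in> range g then x $ (inv g i) else 0)"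
  proof (cases "i \<in> range g")
    case True
    then obtain j0 where j0: "i = g j0" by auto
    have "(\<Sum>j\<in>UNIV. (if i = g j then x $ j else 0)) = (\<Sum>j\<in>UNIV. (if j = j0 then x $ j else 0))"
      using assms j0 by (intro sum.cong) (auto simp: inj_eq)
    also have "\<dots> = x $ j0" by simp
    finally show ?thesis using True j0 assms by simp
  next
    case False
    then show ?thesis by (auto intro!: sum.neutral)
  qed
  finally show ?thesis .
qed

lemma emb_norm:
  fixes g :: "'n::finite \<Rightarrow> 'k::finite"
  assumes "inj g"
  shows "norm (Emb g *v x) = norm x"
proof -
  have "(Emb g *v x) \<bullet> (Emb g *v x) = (\<Sum>i\<in>UNIV. (Emb g *v x) $ i * (Emb g *v x) $ i)"
    by (simp add: inner_vec_def)
  also have "\<dots> = (\<Sum>i\<in>range g. (Emb g *v x) $ i * (Emb g *v x) $ i)"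
    by (rule sum.mono_neutral_right) (auto simp: emb_apply[OF assms])
  also have "\<dots> = (\<Sum>j\<in>UNIV. (Emb g *v x) $ g j * (Emb g *v x) $ g j)"
    using sum.reindex[of g UNIV "\<lambda>i. (Emb g *v x) $ i * (Emb g *v x) $ i"] assms by simp
  also have "\<dots> = (\<Sum>j\<in>UNIV. x $ j * x $ j)"
    by (simp add: emb_apply[OF assms] inv_f_f[OF assms])
  also have "\<dots> = x \<bullet> x" by (simp add: inner_vec_def)
  finally show ?thesis by (simp add: norm_eq_sqrt_inner)
qed

lemma emb_dist:
  fixes g :: "'n::finite \<Rightarrow> 'k::finite"
  assumes "inj g"
  shows "dist (Emb g *v a) (Emb g *v b) = dist a b"
  by (simp add: dist_norm matrix_vector_mult_diff_distrib[symmetric] emb_norm[OF assms])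

definition Prj :: "('m \<Rightarrow> 'k) \<Rightarrow> real^'k^'m" where
  "Prj g = (\<chi> i j. if j = g i then 1 else 0)"

definition Ext :: "('m \<Rightarrow> 'k) \<Rightarrow> real^'m \<Rightarrow> real^'k" where
  "Ext g y = (\<chi> j. if j \<in> range g then y $ (inv g j) else 0)"

lemma prj_ext:
  fixes g :: "'m::finite \<Rightarrow> 'k::finite"
  assumes "inj g"
  shows "Prj g *v Ext g y = y"
proof -
  have "(Prj g *v v) $ i = v $ g i" for v :: "real^'k" and i
  proof -
    have "(Prj g *v v) $ i = (\<Sum>j\<in>UNIV. (if j = g i then 1 else 0) * v $ j)"
      unfolding Prj_def matrix_vector_mult_def by simp
    also have "\<dots> = (\<Sum>j\<in>UNIV. (if j = g i then v $ j else 0))"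
      by (rule sum.cong) auto
    also have "\<dots> = v $ g i" by simp
    finally show ?thesis .
  qed
  then show ?thesis unfolding vec_eq_iff Ext_def using assms by (simp add: inv_f_f)
qed

lemma cover_exists:
  fixes f :: "'a::metric_space \<Rightarrow> 'b::metric_space"
  assumes K: "compact K" and fc: "continuous_on K f" and dp: "\<delta> > 0"
  shows "\<exists>M. cover_ok f K \<delta> M"
proof -
  have "uniformly_continuous_on K f" using compact_uniformly_continuous[OF fc K] .
  then obtain \<eta> where \<eta>: "\<eta> > 0" "\<forall>x\<in>K. \<forall>y\<in>K. dist y x < \<eta> \<longrightarrow> dist (f y) (f x) < \<delta>"
    unfolding uniformly_continuous_on_def using dp by blast
  define \<rho> where "\<rho> = min \<eta> (1/2)"
  have rp: "\<rho> > 0" "\<rho> < 1" "\<rho> \<le> \<eta>" unfolding \<rho>_def using \<eta> by auto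
  obtain F where F: "finite F" "K \<subseteq> (\<Union>x\<in>F. ball x (\<rho>/2))"
    using K rp unfolding compact_eq_totally_bounded by (meson half_gt_zero)
  define sep where "sep S \<longleftrightarrow> S \<subseteq> K \<and> finite S \<and> (\<forall>x\<in>S. \<forall>y\<in>S. x \<noteq> y \<longrightarrow> \<rho> \<le> dist x y)" for S
  have bnd: "card S < card F + 1" if "sep S" for S
  proof -
    have "\<forall>s\<in>S. \<exists>y\<in>F. dist y s < \<rho>/2" using that F unfolding sep_def by (auto simp: subset_iff)
    then obtain \<phi> where \<phi>: "\<forall>s\<in>S. \<phi> s \<in> F \<and> dist (\<phi> s) s < \<rho>/2" by metis
    have "inj_on \<phi> S"
    proof (rule inj_onI)
      fix x y assume xy: "x \<in> S" "y \<in> S" "\<phi> x = \<phi> y"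
      have "dist x y \<le> dist (\<phi> x) x + dist (\<phi> y) y"
        using dist_triangle3[of x y "\<phi> x"] xy(3) by (simp add: dist_commute)
      also have "\<dots> < \<rho>"
      proof -
        have "dist (\<phi> x) x < \<rho>/2" "dist (\<phi> y) y < \<rho>/2" using \<phi> xy by auto
        then show ?thesis by linarith
      qed
      finally show "x = y" using that xy unfolding sep_def by force
    qed
    then have "card S \<le> card F" by (rule card_inj_on_le) (use \<phi> F in auto)
    then show ?thesis by simp
  qed
  have "sep {}" unfolding sep_def by simp
  from ex_has_greatest_nat[of sep "{}" card "card F + 1", OF this] bnd
  obtain S where S: "sep S" "\<And>S'. sep S' \<Longrightarrow> card S' \<le> card S" by blast
  have cov: "\<exists>s\<in>S. dist s x < \<rho>" if "x \<in> K" for x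
  proof (rule ccontr)
    assume "\<not> ?thesis"
    then have n: "\<forall>s\<in>S. \<rho> \<le> dist s x" by auto
    then have "x \<notin> S" using rp by fastforce
    have "sep (insert x S)" using S(1) n that unfolding sep_def by (auto simp: dist_commute)
    then have "card (insert x S) \<le> card S" by (rule S(2))
    then show False using \<open>x \<notin> S\<close> S(1) unfolding sep_def by auto
  qed
  have fS: "finite S" using S(1) unfolding sep_def by auto
  obtain e where e: "bij_betw e {0..<card S} S" using ex_bij_betw_nat_finite[OF fS] by blast
  have eS: "\<And>i. i < card S \<Longrightarrow> e i \<in> S" using e unfolding bij_betw_def by auto
  have einj: "\<And>i j. i < card S \<Longrightarrow> j < card S \<Longrightarrow> e i = e j \<Longrightarrow> i = j"
    using e unfolding bij_betw_def inj_on_def by auto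
  have esurj: "\<And>s. s \<in> S \<Longrightarrow> \<exists>i<card S. e i = s"
    using e unfolding bij_betw_def by (metis atLeastLessThan_iff imageE)
  have "cover_ok f K \<delta> (card S)"
    unfolding cover_ok_def
  proof (intro exI[of _ e] exI[of _ "\<lambda>_. \<rho>"] conjI allI impI ballI)
    fix i assume i: "i < card S"
    then show "e i \<in> K" using eS S(1) unfolding sep_def by auto
    show "0 < \<rho>" "\<rho> < 1" using rp by auto
    show "f ` (ball (e i) \<rho> \<inter> K) \<subseteq> ball (f (e i)) \<delta>"
    proof
      fix y assume "y \<in> f ` (ball (e i) \<rho> \<inter> K)"
      then obtain x where x: "x \<in> K" "dist (e i) x < \<rho>" "y = f x" by auto
      have "e i \<in> K" using i eS S(1) unfolding sep_def by auto
      then have "dist (f x) (f (e i)) < \<delta>" using \<eta>(2) x rp by (auto simp: dist_commute)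
      then show "y \<in> ball (f (e i)) \<delta>" using x by (simp add: dist_commute)
    qed
  next
    fix i j assume "i < card S" "j < card S" "i \<noteq> j"
    then show "\<rho> \<le> dist (e i) (e j)" using einj eS S(1) unfolding sep_def by blast
  next
    show "K \<subseteq> (\<Union>i<card S. ball (e i) \<rho>)"
    proof
      fix x assume "x \<in> K"
      then obtain s where "s \<in> S" "dist s x < \<rho>" using cov by blast
      then obtain i where "i < card S" "e i = s" using esurj by blast
      then show "x \<in> (\<Union>i<card S. ball (e i) \<rho>)" using \<open>dist s x < \<rho>\<close> by auto
    qed
  qed
  then show ?thesis by blast
qed

theorem theorem6:
  fixes K :: "(real^'n) set" and f :: "real^'n \<Rightarrow> real^'m" and \<epsilon> :: real
  assumes "CARD('n) \<ge> 2"
    and "compact K"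
    and "continuous_on K f"
    and "\<epsilon> > 0"
    and "CARD('k::finite) = max CARD('n) CARD('m)"
  shows "\<exists>F. radial_nn_hidden TYPE('k) (2 * Mcov f K (\<epsilon> / 2)) F \<and>
             (\<forall>x\<in>K. norm (F x - f x) < \<epsilon>)"
proof (cases "K = {}")
  case True
  have "cover_ok f K (\<epsilon>/2) 0" unfolding cover_ok_def using True by auto
  then have M0: "Mcov f K (\<epsilon>/2) = 0" unfolding Mcov_def by (rule Least_eq_0)
  have "radial_nn_hidden TYPE('k) 0 (layer (0::real^'n^'m) 0 (\<lambda>v. v))"
    unfolding radial_nn_hidden_def using radial_id by auto
  then show ?thesis using True M0 by auto
next
  case False
  define M where "M = Mcov f K (\<epsilon>/2)"
  have "cover_ok f K (\<epsilon>/2) M" unfolding M_def Mcov_def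
    by (rule LeastI_ex) (rule cover_exists[OF assms(2,3)], use assms(4) in simp)
  then obtain c r where "(\<forall>i<M. c i \<in> K \<and> 0 < r i \<and> r i < 1) \<and>
    K \<subseteq> (\<Union>i<M. ball (c i) (r i)) \<and>
    (\<forall>i<M. f ` (ball (c i) (r i) \<inter> K) \<subseteq> ball (f (c i)) (\<epsilon>/2)) \<and>
    (\<forall>i<M. \<forall>j<M. i \<noteq> j \<longrightarrow> dist (c i) (c j) \<ge> r i)"
    unfolding cover_ok_def by (elim exE) (rule that)
  then have cr: "\<forall>i<M. c i \<in> K \<and> 0 < r i \<and> r i < 1"
    "K \<subseteq> (\<Union>i<M. ball (c i) (r i))"
    "\<forall>i<M. f ` (ball (c i) (r i) \<inter> K) \<subseteq> ball (f (c i)) (\<epsilon>/2)"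
    "\<forall>i<M. \<forall>j<M. i \<noteq> j \<longrightarrow> dist (c i) (c j) \<ge> r i"
    by auto
  have "CARD('n) \<le> CARD('k)" using assms(5) by simp
  then obtain g :: "'n \<Rightarrow> 'k" where g: "inj g"
    using card_le_inj[of "UNIV::'n set" "UNIV::'k set"] by auto
  have "CARD('m) \<le> CARD('k)" using assms(5) by simp
  then obtain g' :: "'m \<Rightarrow> 'k" where g': "inj g'"
    using card_le_inj[of "UNIV::'m set" "UNIV::'k set"] by auto
  define E where "E = Emb g"
  have Ed: "dist (E *v a) (E *v b) = dist a b" for a b unfolding E_def by (rule emb_dist[OF g])
  define J where "J x = (LEAST j. x \<in> ball (c j) (r j))" for x
  have hJ: "J x < M \<and> x \<in> ball (c (J x)) (r (J x))" if xK: "x \<in> K" for x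
  proof -
    obtain j where j: "j < M" "x \<in> ball (c j) (r j)" using cr(2) xK by auto
    have "J x \<le> j" unfolding J_def using j(2) by (rule Least_le)
    moreover have "x \<in> ball (c (J x)) (r (J x))" unfolding J_def using j(2) by (rule LeastI)
    ultimately show ?thesis using j by auto
  qed
  have "M \<noteq> 0"
  proof -
    obtain x0 where "x0 \<in> K" using False by auto
    then show ?thesis using hJ by fastforce
  qed
  define st where "st i x = (if \<exists>j<i. x \<in> ball (c j) (r j) then E *v c (J x) else E *v x)" for i x
  have coll: "st (Suc i) = (\<lambda>x. E *v c i + radial_rescale (\<lambda>s. if s < r i then 0 else s) (st i x - E *v c i))"
    if i: "i < M" for i
  proof
    fix x
    have ri: "r i > 0" using cr(1) i by auto
    have "st (Suc i) x = (if dist (st i x) (E *v c i) < r i then E *v c i else st i x)"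
    proof (cases "\<exists>j<i. x \<in> ball (c j) (r j)")
      case True
      then obtain j where j: "j < i" "x \<in> ball (c j) (r j)" by auto
      have "J x \<le> j" unfolding J_def using j(2) by (rule Least_le)
      then have "J x < i" "J x < M" using j i by auto
      then have "dist (c i) (c (J x)) \<ge> r i" using cr(4) i by auto
      then have "\<not> dist (E *v c (J x)) (E *v c i) < r i" by (simp add: Ed dist_commute)
      moreover have "\<exists>j<Suc i. x \<in> ball (c j) (r j)" using j less_SucI by blast
      ultimately show ?thesis using True unfolding st_def by auto
    next
      case nF: False
      show ?thesis
      proof (cases "dist x (c i) < r i")
        case True
        then have xb: "x \<in> ball (c i) (r i)" by (simp add: dist_commute)
        have "J x = i" unfolding J_def
        proof (rule Least_equality)
          show "x \<in> ball (c i) (r i)" by (rule xb)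
          fix y assume "x \<in> ball (c y) (r y)"
          then show "i \<le> y" using nF by (meson not_le)
        qed
        then show ?thesis using nF True xb unfolding st_def by (auto simp: Ed)
      next
        case False
        then have "\<not> (\<exists>j<Suc i. x \<in> ball (c j) (r j))" using nF
          by (auto simp: less_Suc_eq dist_commute)
        then show ?thesis using nF False unfolding st_def by (auto simp: Ed)
      qed
    qed
    then show "st (Suc i) x = E *v c i + radial_rescale (\<lambda>s. if s < r i then 0 else s) (st i x - E *v c i)"
      by (simp add: collapse[OF ri])
  qed
  have ph1: "habs (Suc i) (st (Suc i))" if "i < M" for i
    using that
  proof (induction i)
    case 0
    have "st 0 = (\<lambda>x. E *v x)" unfolding st_def by auto
    have "habs 1 (\<lambda>x. E *v c 0 + radial_rescale (\<lambda>s. if s < r 0 then 0 else s) (E *v x - E *v c 0))"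
      by (rule habs1[OF pd_collapse])
    moreover have "st (Suc 0) = (\<lambda>x. E *v c 0 + radial_rescale (\<lambda>s. if s < r 0 then 0 else s) (E *v x - E *v c 0))"
      using coll[OF 0] \<open>st 0 = (\<lambda>x. E *v x)\<close> by simp
    ultimately show ?case by simp
  next
    case (Suc i)
    then have "habs (Suc i) (st (Suc i))" by auto
    then have "habs (Suc (Suc i)) (\<lambda>x. E *v c (Suc i) + radial_rescale (\<lambda>s. if s < r (Suc i) then 0 else s) (st (Suc i) x - E *v c (Suc i)))"
      by (rule habs_step[OF _ _ pd_collapse]) simp
    then show ?case using coll[OF Suc(2)] by simp
  qed
  have stM: "st M x = E *v c (J x)" if "x \<in> K" for x
    using hJ[OF that] unfolding st_def by auto
  define B where "B = (\<lambda>(a, b). E *v c a - Ext g' (f (c b))) ` ({..<M} \<times> {..<M})"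
  have "finite B" unfolding B_def by auto
  then obtain \<beta> where \<beta>: "\<beta> \<notin> B"
    using ex_new_if_finite[OF infinite_UNIV_vec[OF infinite_UNIV_char_0]] by blast
  define t where "t b = Ext g' (f (c b)) + \<beta>" for b
  have tne: "t b \<noteq> E *v c a" if "a < M" "b < M" for a b
  proof
    assume "t b = E *v c a"
    then have "\<beta> = E *v c a - Ext g' (f (c b))" unfolding t_def by (simp add: algebra_simps)
    then have "\<beta> \<in> B" unfolding B_def using that by force
    then show False using \<beta> by simp
  qed
  have Ene: "E *v c a \<noteq> E *v c b" if "a < M" "b < M" "a \<noteq> b" for a b
  proof
    assume "E *v c a = E *v c b"
    then have "dist (c a) (c b) = 0" using Ed[of "c a" "c b"] by simp
    moreover have "dist (c a) (c b) \<ge> r a" "r a > 0" using cr(1,4) that by auto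
    ultimately show False by simp
  qed
  define st2 where "st2 l x = (if J x < l then t (J x) else E *v c (J x))" for l x
  have ph2: "\<exists>P. habs (M + l) P \<and> (\<forall>x\<in>K. P x = st2 l x)" if "l \<le> M" for l
    using that
  proof (induction l)
    case 0
    have "habs (Suc (M - 1)) (st (Suc (M - 1)))" by (rule ph1) (use \<open>M \<noteq> 0\<close> in auto)
    then have "habs M (st M)" using \<open>M \<noteq> 0\<close> by simp
    then show ?case using stM unfolding st2_def by auto
  next
    case (Suc l)
    then have l: "l < M" by auto
    obtain P where P: "habs (M + l) P" "\<forall>x\<in>K. P x = st2 l x" using Suc by auto
    define Q where "Q = t ` {..<l} \<union> (\<lambda>j. E *v c j) ` ({..<M} - {l})"
    have "E *v c l \<noteq> t l" using tne l by metis
    moreover have "finite Q" unfolding Q_def by auto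
    moreover have "E *v c l \<notin> Q"
    proof
      assume "E *v c l \<in> Q"
      then consider (a) b where "b < l" "E *v c l = t b" | (b) j where "j < M" "j \<noteq> l" "E *v c l = E *v c j"
        unfolding Q_def by auto
      then show False
      proof cases
        case a
        then show False using tne[of l b] l by auto
      next
        case b
        then show False using Ene[of l j] l by auto
      qed
    qed
    ultimately obtain z h where zh: "piecewise_diff h" "z + radial_rescale h (E *v c l - z) = t l"
      "\<forall>q\<in>Q. z + radial_rescale h (q - z) = q"
      using move by blast
    have "habs (Suc (M + l)) (\<lambda>x. z + radial_rescale h (P x - z))"
      by (rule habs_step[OF P(1) _ zh(1)]) (use \<open>M \<noteq> 0\<close> in auto)
    moreover have "\<forall>x\<in>K. z + radial_rescale h (P x - z) = st2 (Suc l) x"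
    proof
      fix x assume x: "x \<in> K"
      have JM: "J x < M" using hJ[OF x] by auto
      consider "J x < l" | "J x = l" | "J x > l" by linarith
      then show "z + radial_rescale h (P x - z) = st2 (Suc l) x"
      proof cases
        case 1
        then have "t (J x) \<in> Q" unfolding Q_def by auto
        then show ?thesis using 1 P(2) x zh(3) unfolding st2_def by auto
      next
        case 2
        then show ?thesis using P(2) x zh(2) unfolding st2_def by auto
      next
        case 3
        then have "E *v c (J x) \<in> Q" unfolding Q_def using JM by auto
        then show ?thesis using 3 P(2) x zh(3) unfolding st2_def by auto
      qed
    qed
    ultimately show ?case by auto
  qed
  obtain P where P: "habs (M + M) P" "\<forall>x\<in>K. P x = st2 M x" using ph2[of M] by auto
  define F where "F x = Prj g' *v P x + (- (Prj g' *v \<beta>))" for x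
  have "radial_nn_hidden TYPE('k) (M + M) F"
    unfolding F_def by (rule habs_out[OF P(1)]) (use \<open>M \<noteq> 0\<close> in auto)
  moreover have "norm (F x - f x) < \<epsilon>" if x: "x \<in> K" for x
  proof -
    have JM: "J x < M" and xb: "x \<in> ball (c (J x)) (r (J x))" using hJ[OF x] by auto
    have "F x = f (c (J x))"
      using P(2) x JM unfolding F_def st2_def t_def
      by (simp add: matrix_vector_right_distrib prj_ext[OF g'])
    moreover have "f x \<in> ball (f (c (J x))) (\<epsilon>/2)" using cr(3) JM xb x by blast
    ultimately have "norm (F x - f x) < \<epsilon>/2" by (simp add: dist_norm)
    then show ?thesis using assms(4) by simp
  qed
  ultimately show ?thesis unfolding M_def by (auto simp: mult_2)
qed

end
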